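(* Let $\lambda_{\max}>1$ and let $F:[0,\lambda_{\max}]\to\mathbb{R}_+$ be continuously differentiable with $F(0)=0$, such that $F(x)<F^\star$ for all $x\in[0,1)$ and $F'(1)>0$. Suppose $x_1^\star\in(1,\lambda_{\max}]$, $x_2^\star\in[0,1)$, $p^\star\in(0,1)$ are such that the measure $\alpha(\{x_1^\star\})=p^\star$, $\alpha(\{x_2^\star\})=1-p^\star$ is an optimal solution of the problem defining $F^\star$. Let $\varepsilon>0$. Then for every stable control policy $\lambda$ with $R(\lambda)\le\varepsilon$, $$\mathbb{E}_\pi[\lambda(\bar q)]=1-\pi_0\ge 1-\frac{x_1^\star-x_2^\star}{F(x_1^\star)-F(x_2^\star)}\,\varepsilon.$$
   Context: A control policy is a function $\lambda:\mathbb{Z}_+\to[0,\lambda_{\max}]$; it defines a continuous-time birth–death chain on $\mathbb{Z}_+$ with rate $\lambda(q)$ from $q$ to $q+1$ and rate $1$ from $q$ to $q-1$ ($q\ge1$). Let $\mathcal S$ be the set of states reachable from $0$. The policy is stable if $\sum_{i\in\mathcal S}\prod_{q=0}^{i}\lambda(q)<\infty$ (positive recurrence on $\mathcal S$); then $\pi$ is its stationary distribution (with $\pi_0$ the mass at state $0$) and $\bar q\sim\pi$. $F^\star=\sup\{\mathbb{E}_\alpha[F(X)]:\alpha$ a probability measure on $[0,\lambda_{\max}]$, $X\sim\alpha$, $\mathbb{E}_\alpha[X]\le1\}$; regret $R(\lambda)=F^\star-\mathbb{E}_\pi[F(\lambda(\bar q))]$. *)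

theory Defs
  imports "HOL-Probability.Probability"
begin

definition reach :: "(nat \<Rightarrow> real) \<Rightarrow> nat set" where
  "reach lam = {i. \<forall>q<i. lam q > 0}"

definition stable :: "(nat \<Rightarrow> real) \<Rightarrow> bool" where
  "stable lam \<longleftrightarrow> (\<lambda>i. \<Prod>q\<in>{0..i}. lam q) summable_on reach lam"

text \<open>Stationary distribution of the birth-death chain on the reachable set
  (detailed balance: pi i proportional to prod_{q<i} lam q).\<close>
definition stat_dist :: "(nat \<Rightarrow> real) \<Rightarrow> nat \<Rightarrow> real" where
  "stat_dist lam i =
     (if i \<in> reach lam
      then (\<Prod>q<i. lam q) / (\<Sum>\<^sub>\<infinity> j\<in>reach lam. \<Prod>q<j. lam q)
      else 0)"

definition control_policy :: "real \<Rightarrow> (nat \<Rightarrow> real) \<Rightarrow> bool" where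
  "control_policy lmax lam \<longleftrightarrow> (\<forall>q. 0 \<le> lam q \<and> lam q \<le> lmax)"

definition Fstar :: "real \<Rightarrow> (real \<Rightarrow> real) \<Rightarrow> real" where
  "Fstar lmax F = Sup {(LINT x:{0..lmax}|\<alpha>. F x) | \<alpha>.
      prob_space \<alpha> \<and> sets \<alpha> = sets borel \<and> measure \<alpha> {0..lmax} = 1 \<and>
      (LINT x:{0..lmax}|\<alpha>. x) \<le> 1}"

definition regret :: "real \<Rightarrow> (real \<Rightarrow> real) \<Rightarrow> (nat \<Rightarrow> real) \<Rightarrow> real" where
  "regret lmax F lam = Fstar lmax F - (\<Sum>\<^sub>\<infinity> i\<in>reach lam. stat_dist lam i * F (lam i))"

end

theory Submission imports Defs begin

lemma Fstar_bdd:
  fixes F :: "real \<Rightarrow> real"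
  assumes B: "\<forall>x\<in>{0..lmax}. F x \<le> B" and B0: "0 \<le> B"
  shows "bdd_above {(LINT x:{0..lmax}|\<alpha>. F x) | \<alpha>.
      prob_space \<alpha> \<and> sets \<alpha> = sets borel \<and> measure \<alpha> {0..lmax} = 1 \<and>
      (LINT x:{0..lmax}|\<alpha>. x) \<le> 1}"
proof (rule bdd_aboveI[where M=B], clarify)
  fix \<alpha> :: "real measure"
  assume ps: "prob_space \<alpha>"
  have pt: "indicator {0..lmax} x *\<^sub>R F x \<le> B" for x
    using B B0 by (auto simp: indicator_def)
  show "(LINT x:{0..lmax}|\<alpha>. F x) \<le> B"
    unfolding set_lebesgue_integral_def
  proof (cases "integrable \<alpha> (\<lambda>x. indicator {0..lmax} x *\<^sub>R F x)")
    case True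
    then show "(LINT x|\<alpha>. indicator {0..lmax} x *\<^sub>R F x) \<le> B"
      using prob_space.integral_le_const[OF ps True] pt by simp
  next
    case False
    then show "(LINT x|\<alpha>. indicator {0..lmax} x *\<^sub>R F x) \<le> B"
      using B0 by (simp add: not_integrable_integral_eq)
  qed
qed

lemma two_point:
  fixes F :: "real \<Rightarrow> real"
  assumes B: "\<forall>x\<in>{0..lmax}. F x \<le> B" and B0: "0 \<le> B"
    and contF: "continuous_on {0..lmax} F"
    and a: "a \<in> {0..lmax}" and b: "b \<in> {0..lmax}" and q: "0 \<le> q" "q \<le> 1"
    and mean: "q * a + (1 - q) * b \<le> 1"
  shows "q * F a + (1 - q) * F b \<le> Fstar lmax F"
proof -
  define P where "P = map_pmf (\<lambda>c. if c then a else b) (bernoulli_pmf q)"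
  define \<alpha> where "\<alpha> = distr (measure_pmf P) borel id"
  have meas: "id \<in> measurable (measure_pmf P) borel" by simp
  have ps: "prob_space \<alpha>" unfolding \<alpha>_def
    by (rule prob_space.prob_space_distr[OF _ meas]) (simp add: measure_pmf.prob_space_axioms)
  have sets: "sets \<alpha> = sets borel" unfolding \<alpha>_def by simp
  have setP: "set_pmf P \<subseteq> {0..lmax}" unfolding P_def using a b by auto
  have m1: "measure \<alpha> {0..lmax} = 1" unfolding \<alpha>_def
    using setP by (simp add: measure_distr measure_pmf.prob_eq_1 AE_measure_pmf_iff subset_eq)
  have gen: "(LINT x:{0..lmax}|\<alpha>. g x) = q * g a + (1 - q) * g b"
    if "continuous_on {0..lmax} g" for g :: "real \<Rightarrow> real"
  proof -
    have bm: "(\<lambda>x. indicator {0..lmax} x *\<^sub>R g x) \<in> borel_measurable borel"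
      by (rule borel_measurable_continuous_on_indicator) (use that in auto)
    show ?thesis unfolding set_lebesgue_integral_def \<alpha>_def
      using integral_distr[OF meas bm] q a b by (simp add: P_def)
  qed
  have v: "(LINT x:{0..lmax}|\<alpha>. F x) = q * F a + (1 - q) * F b" by (rule gen[OF contF])
  have mn: "(LINT x:{0..lmax}|\<alpha>. x) = q * a + (1 - q) * b" by (rule gen) (intro continuous_intros)
  have "q * F a + (1 - q) * F b \<in> {(LINT x:{0..lmax}|\<alpha>. F x) | \<alpha>.
      prob_space \<alpha> \<and> sets \<alpha> = sets borel \<and> measure \<alpha> {0..lmax} = 1 \<and>
      (LINT x:{0..lmax}|\<alpha>. x) \<le> 1}"
    using ps sets m1 v mn mean by (metis (mono_tags, lifting) mem_Collect_eq)
  then show ?thesis unfolding Fstar_def by (rule cSup_upper[OF _ Fstar_bdd[OF B B0]])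
qed
lemma infsum_reach_suminf:
  fixes g :: "nat \<Rightarrow> real"
  assumes "\<And>i. i \<notin> R \<Longrightarrow> g i = 0" "summable g" "\<And>i. g i \<ge> 0"
  shows "infsum g R = suminf g"
proof -
  have "infsum g R = infsum g UNIV"
    by (rule infsum_cong_neutral) (use assms(1) in auto)
  also have "\<dots> = suminf g"
    by (rule infsumI, rule sums_nonneg_imp_has_sum) (use assms in auto)
  finally show ?thesis .
qed

theorem lemmaB2:
  fixes lmax :: real and F F' :: "real \<Rightarrow> real" and x1 x2 p \<epsilon> :: real
    and lam :: "nat \<Rightarrow> real"
  assumes lmax: "lmax > 1"
    and Fnn: "\<forall>x\<in>{0..lmax}. F x \<ge> 0"
    and Fderiv: "\<forall>x\<in>{0..lmax}. (F has_real_derivative F' x) (at x within {0..lmax})"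
    and F'cont: "continuous_on {0..lmax} F'"
    and F0: "F 0 = 0"
    and Flt: "\<forall>x\<in>{0..<1}. F x < Fstar lmax F"
    and F'1: "F' 1 > 0"
    and x1: "1 < x1" "x1 \<le> lmax"
    and x2: "0 \<le> x2" "x2 < 1"
    and p: "0 < p" "p < 1"
    and feas: "p * x1 + (1 - p) * x2 \<le> 1"
    and opt: "p * F x1 + (1 - p) * F x2 = Fstar lmax F"
    and eps: "\<epsilon> > 0"
    and pol: "control_policy lmax lam"
    and stab: "stable lam"
    and reg: "regret lmax F lam \<le> \<epsilon>"
  shows "(\<Sum>\<^sub>\<infinity> i\<in>reach lam. stat_dist lam i * lam i) = 1 - stat_dist lam 0
       \<and> 1 - stat_dist lam 0 \<ge> 1 - (x1 - x2) / (F x1 - F x2) * \<epsilon>"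
proof -
  have contF: "continuous_on {0..lmax} F"
    using Fderiv by (metis DERIV_continuous continuous_on_eq_continuous_within)
  obtain xm where xm: "xm \<in> {0..lmax}" "\<forall>y\<in>{0..lmax}. F y \<le> F xm"
    using continuous_attains_sup[OF compact_Icc _ contF] lmax by fastforce
  define B where "B = F xm"
  have B: "\<forall>x\<in>{0..lmax}. F x \<le> B" and B0: "0 \<le> B"
    using xm Fnn by (auto simp: B_def)
  have lam0: "0 \<le> lam q" "lam q \<le> lmax" for q using pol by (auto simp: control_policy_def)
  define w where "w i = (\<Prod>q<i. lam q)" for i
  have w0: "w i \<ge> 0" for i unfolding w_def using lam0 by (simp add: prod_nonneg)
  have wout: "w i = 0" if ni: "i \<notin> reach lam" for i
  proof -
    obtain q where "q < i" "\<not> lam q > 0" using ni by (auto simp: reach_def)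
    then have "lam q = 0" using lam0[of q] by simp
    then show ?thesis unfolding w_def using \<open>q < i\<close> by (auto simp: prod_zero_iff)
  qed
  have reachSuc: "i \<in> reach lam" if "Suc i \<in> reach lam" for i
    using that by (auto simp: reach_def)
  have "(\<lambda>i. w (Suc i)) summable_on reach lam"
    using stab unfolding stable_def w_def
    by (simp add: atLeast0AtMost lessThan_Suc_atMost)
  moreover have "(\<lambda>i. w (Suc i)) summable_on UNIV \<longleftrightarrow> (\<lambda>i. w (Suc i)) summable_on reach lam"
  proof (rule summable_on_cong_neutral)
    fix x assume "x \<in> UNIV - reach lam"
    then have "Suc x \<notin> reach lam" using reachSuc by blast
    then show "w (Suc x) = 0" by (rule wout)
  qed auto
  ultimately have "(\<lambda>i. w (Suc i)) summable_on UNIV" by (rule rev_iffD2)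
  then have "summable (\<lambda>i. w (Suc i))"
    by (rule summable_on_UNIV_nonneg_real_iff[THEN iffD1, rotated]) (rule w0)
  then have sw: "summable w" by (simp only: summable_Suc_iff)
  define Z where "Z = suminf w"
  have wS0: "w 0 = 1" by (simp add: w_def)
  have ZS: "suminf (\<lambda>i. w (Suc i)) = Z - 1"
    using suminf_split_head[OF sw] wS0 by (simp add: Z_def)
  have Zge: "Z \<ge> 1" using ZS suminf_nonneg[OF \<open>summable (\<lambda>i. w (Suc i))\<close>] w0 by force
  have Zinf: "(\<Sum>\<^sub>\<infinity> j\<in>reach lam. \<Prod>q<j. lam q) = Z"
  proof -
    have e: "(\<lambda>j. \<Prod>q<j. lam q) = w" by (auto simp: w_def)
    show ?thesis unfolding Z_def e by (rule infsum_reach_suminf) (use wout sw w0 in auto)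
  qed
  have st: "stat_dist lam i = w i / Z" for i
    unfolding stat_dist_def Zinf using wout by (auto simp: w_def)
  have st0: "stat_dist lam 0 = 1 / Z" using st wS0 by simp
  have wl: "w i * lam i = w (Suc i)" for i by (simp add: w_def)
  have spi: "summable (\<lambda>i. stat_dist lam i)" unfolding st using sw by (simp add: summable_divide)
  have sum_pi: "suminf (\<lambda>i. stat_dist lam i) = 1"
    unfolding st using sw Zge by (simp add: suminf_divide Z_def[symmetric])
  have spl: "summable (\<lambda>i. stat_dist lam i * lam i)"
    unfolding st using \<open>summable (\<lambda>i. w (Suc i))\<close> by (simp add: wl summable_divide)
  have sum_pl: "suminf (\<lambda>i. stat_dist lam i * lam i) = 1 - stat_dist lam 0"
  proof -
    have "(\<lambda>i. stat_dist lam i * lam i) = (\<lambda>i. w (Suc i) / Z)"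
      unfolding st using wl by (auto simp: field_simps)
    then have "suminf (\<lambda>i. stat_dist lam i * lam i) = (Z - 1) / Z"
      using \<open>summable (\<lambda>i. w (Suc i))\<close> ZS by (simp add: suminf_divide)
    moreover have "(Z - 1) / Z = 1 - 1 / Z" using Zge by (simp add: diff_divide_distrib)
    ultimately show ?thesis using st0 by simp
  qed
  have stn: "stat_dist lam i \<ge> 0" for i using st w0 Zge by simp
  have stout: "stat_dist lam i = 0" if "i \<notin> reach lam" for i using st wout that by simp
  have goal1: "(\<Sum>\<^sub>\<infinity> i\<in>reach lam. stat_dist lam i * lam i) = 1 - stat_dist lam 0"
    using infsum_reach_suminf[of "reach lam" "\<lambda>i. stat_dist lam i * lam i"] stout spl stn lam0 sum_pl
    by simp
  have lamI: "lam i \<in> {0..lmax}" for i using lam0 by auto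
  have spF: "summable (\<lambda>i. stat_dist lam i * F (lam i))"
    by (rule summable_comparison_test[where g="\<lambda>i. stat_dist lam i * B"])
       (use stn B Fnn lamI spi in \<open>auto intro!: exI[of _ 0] mult_left_mono simp: summable_mult2\<close>)
  have sumF: "(\<Sum>\<^sub>\<infinity> i\<in>reach lam. stat_dist lam i * F (lam i)) = suminf (\<lambda>i. stat_dist lam i * F (lam i))"
    by (rule infsum_reach_suminf) (use stout spF stn Fnn lamI in auto)
  have x1I: "x1 \<in> {0..lmax}" and x2I: "x2 \<in> {0..lmax}" using x1 x2 lmax by auto
  have F2lt: "F x2 < Fstar lmax F" using Flt x2 by auto
  have F12: "F x2 < F x1"
  proof (rule ccontr)
    assume "\<not> F x2 < F x1"
    then have "p * F x1 \<le> p * F x2" using p by (simp add: mult_left_mono)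
    moreover have "p * F x2 + (1 - p) * F x2 = F x2" by (simp add: algebra_simps)
    ultimately show False using opt F2lt by linarith
  qed
  define s where "s = (F x1 - F x2) / (x1 - x2)"
  have s0: "s > 0" unfolding s_def using F12 x1 x2 by simp
  define L where "L x = F x2 + s * (x - x2)" for x
  have Lx1: "L x1 = F x1" unfolding L_def s_def using x1 x2 by (simp add: field_simps)
  have mean1: "p * x1 + (1 - p) * x2 = 1"
  proof (rule ccontr)
    assume "p * x1 + (1 - p) * x2 \<noteq> 1"
    then have lt: "p * x1 + (1 - p) * x2 < 1" using feas by simp
    define d where "d = min (1 - p) ((1 - (p * x1 + (1 - p) * x2)) / (x1 - x2))"
    have d0: "d > 0" unfolding d_def using p lt x1 x2 by simp
    have "(p + d) * x1 + (1 - (p + d)) * x2 = p * x1 + (1 - p) * x2 + d * (x1 - x2)"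
      by (simp add: algebra_simps)
    also have "\<dots> \<le> 1"
    proof -
      have "d \<le> (1 - (p * x1 + (1 - p) * x2)) / (x1 - x2)" unfolding d_def by simp
      then have "d * (x1 - x2) \<le> 1 - (p * x1 + (1 - p) * x2)" using x1 x2 by (simp add: pos_le_divide_eq)
      then show ?thesis by simp
    qed
    finally have "(p + d) * F x1 + (1 - (p + d)) * F x2 \<le> Fstar lmax F"
      using two_point[OF B B0 contF x1I x2I] d0 p by (simp add: d_def)
    moreover have "(p + d) * F x1 + (1 - (p + d)) * F x2 = Fstar lmax F + d * (F x1 - F x2)"
      using opt by (simp add: algebra_simps)
    ultimately show False using d0 F12 by (smt (verit) mult_pos_pos)
  qed
  have L1: "L 1 = Fstar lmax F"
  proof -
    have h: "1 - x2 = p * (x1 - x2)" using mean1 by (simp add: algebra_simps)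
    have "L 1 = F x2 + (F x1 - F x2) / (x1 - x2) * (p * (x1 - x2))"
      unfolding L_def s_def h ..
    also have "\<dots> = F x2 + (F x1 - F x2) * p" using x1 x2 by simp
    also have "\<dots> = Fstar lmax F" using opt by (simp add: algebra_simps)
    finally show ?thesis .
  qed
  have supp: "F y \<le> L y" if y: "y \<in> {0..lmax}" for y
  proof (rule ccontr)
    assume "\<not> F y \<le> L y"
    then have gt: "F y > L y" by simp
    consider "y < 1" | "y = 1" | "y > 1" by linarith
    then show False
    proof cases
      case 1
      define q where "q = (x1 - 1) / (x1 - y)"
      have q: "0 \<le> q" "q \<le> 1" unfolding q_def using 1 x1 y by auto
      have m: "q * y + (1 - q) * x1 = 1"
      proof -
        have nz: "x1 - y \<noteq> 0" using 1 x1 by simp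
        have qm: "q * (x1 - y) = x1 - 1" unfolding q_def using nz by simp
        have "q * y + (1 - q) * x1 = x1 - q * (x1 - y)" by (simp add: algebra_simps)
        then show ?thesis using qm by linarith
      qed
      have "q * F y + (1 - q) * F x1 \<le> Fstar lmax F"
        using two_point[OF B B0 contF y x1I q] m by simp
      moreover have "q * L y + (1 - q) * L x1 = L 1"
      proof -
        have "q * L y + (1 - q) * L x1 = F x2 + s * ((q * y + (1 - q) * x1) - x2)"
          unfolding L_def by (simp add: algebra_simps)
        then show ?thesis unfolding m L_def .
      qed
      moreover have "q > 0" unfolding q_def using 1 x1 by simp
      ultimately show False using gt Lx1 L1 by (smt (verit) mult_strict_left_mono)
    next
      case 2
      have "1 * F y + (1 - 1) * F y \<le> Fstar lmax F"
        by (rule two_point[OF B B0 contF y y]) (use 2 in auto)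
      then show False using gt 2 L1 by simp
    next
      case 3
      define q where "q = (y - 1) / (y - x2)"
      have q: "0 \<le> q" "q \<le> 1" unfolding q_def using 3 x2 y by auto
      have m: "q * x2 + (1 - q) * y = 1"
      proof -
        have nz: "y - x2 \<noteq> 0" using 3 x2 by simp
        have qm: "q * (y - x2) = y - 1" unfolding q_def using nz by simp
        have "q * x2 + (1 - q) * y = y - q * (y - x2)" by (simp add: algebra_simps)
        then show ?thesis using qm by linarith
      qed
      have "q * F x2 + (1 - q) * F y \<le> Fstar lmax F"
        using two_point[OF B B0 contF x2I y q] m by simp
      moreover have "q * L x2 + (1 - q) * L y = L 1"
      proof -
        have "q * L x2 + (1 - q) * L y = F x2 + s * ((q * x2 + (1 - q) * y) - x2)"
          unfolding L_def by (simp add: algebra_simps)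
        then show ?thesis unfolding m L_def .
      qed
      moreover have "q < 1" unfolding q_def using 3 x2 by simp
      moreover have "L x2 = F x2" unfolding L_def by simp
      ultimately show False using gt L1 by (smt (verit) mult_strict_left_mono)
    qed
  qed
  have "suminf (\<lambda>i. stat_dist lam i * F (lam i)) \<le> suminf (\<lambda>i. stat_dist lam i * L (lam i))"
  proof (rule suminf_le)
    show "summable (\<lambda>i. stat_dist lam i * L (lam i))"
      unfolding L_def using spi spl
      by (simp add: distrib_left right_diff_distrib summable_mult2 summable_diff summable_add
            mult.left_commute[of _ s] summable_mult)
  qed (use spF stn supp lamI in \<open>auto intro: mult_left_mono\<close>)
  also have "suminf (\<lambda>i. stat_dist lam i * L (lam i))
      = (F x2 - s * x2) * suminf (\<lambda>i. stat_dist lam i) + s * suminf (\<lambda>i. stat_dist lam i * lam i)"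
  proof -
    have "(\<lambda>i. stat_dist lam i * L (lam i)) = (\<lambda>i. (F x2 - s * x2) * stat_dist lam i + s * (stat_dist lam i * lam i))"
      unfolding L_def by (auto simp: algebra_simps)
    then show ?thesis using spi spl
      by (simp add: suminf_add[symmetric] summable_mult suminf_mult)
  qed
  also have "\<dots> = L (1 - stat_dist lam 0)" unfolding sum_pi sum_pl L_def by (simp add: algebra_simps)
  finally have "Fstar lmax F - \<epsilon> \<le> L (1 - stat_dist lam 0)"
    using reg unfolding regret_def sumF by simp
  then have "s * stat_dist lam 0 \<le> \<epsilon>" using L1 unfolding L_def by (simp add: algebra_simps)
  then have "stat_dist lam 0 \<le> \<epsilon> / s" using s0 by (simp add: field_simps)
  also have "\<epsilon> / s = (x1 - x2) / (F x1 - F x2) * \<epsilon>" unfolding s_def by simp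
  finally show ?thesis using goal1 by simp
qed

end
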